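(* Let $u$ be the solution of the Cauchy problem in the context. Then for every $t>0$, $u(\cdot,t)$ is convex on $[0,1]$. Moreover there exist constants $c>0$ and $\mu\in\mathbb{R}$ such that $0\le\partial^2_{xx}u(x,t)\le c\,e^{\mu t}$ for all $x\in[0,1]$ and $t>0$.
   Context: Constants: $f_0>0$, $f_1\ge0$ with $\sigma=f_0-f_1>0$; $\lambda_0,\lambda_1\ge0$; $\gamma_0,\gamma_1\in(0,1]$. With $\mathcal{J}_0u(x,t)=u(x+\gamma_0(1-x),t)-u(x,t)$ and $\mathcal{J}_1u(x,t)=u(x-\gamma_1x,t)-u(x,t)$, $u$ is the unique (mild) solution, which is $C^\infty$ on $[0,1]\times[0,\infty)$, of \[ \partial_tu+\sigma(1-x)x\,\partial_xu=\lambda_0f_0\mathcal{J}_0u+\lambda_1f_1\mathcal{J}_1u\ (0\le x\le1,\ t>0),\quad u(x,0)=x. \] *)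

theory Defs
  imports "HOL-Analysis.Analysis"
begin

text \<open>The domain Q = [0,1] x [0,oo).  A family D i j of functions is a complete
  system of continuous partial derivatives of D 0 0 on Q: D i j is the partial
  derivative of order i in x and order j in t (one-sided at the boundary of Q).
  Having such a family is exactly C-infinity smoothness on the closed set Q.\<close>

definition smooth_partials :: "(nat \<Rightarrow> nat \<Rightarrow> real \<Rightarrow> real \<Rightarrow> real) \<Rightarrow> bool" where
  "smooth_partials D \<longleftrightarrow>
     (\<forall>i j. continuous_on ({0..1} \<times> {0..}) (\<lambda>(x,t). D i j x t)) \<and>
     (\<forall>i j t. t \<ge> 0 \<longrightarrow> (\<forall>x\<in>{0..1}.
        ((\<lambda>y. D i j y t) has_real_derivative D (Suc i) j x t) (at x within {0..1}))) \<and>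
     (\<forall>i j x. x \<in> {0..1} \<longrightarrow> (\<forall>t\<ge>0.
        ((\<lambda>s. D i j x s) has_real_derivative D i (Suc j) x t) (at t within {0..})))"

definition is_solution ::
  "real \<Rightarrow> real \<Rightarrow> real \<Rightarrow> real \<Rightarrow> real \<Rightarrow> real \<Rightarrow>
   (nat \<Rightarrow> nat \<Rightarrow> real \<Rightarrow> real \<Rightarrow> real) \<Rightarrow> bool" where
  "is_solution f0 f1 l0 l1 g0 g1 D \<longleftrightarrow>
     smooth_partials D \<and>
     (\<forall>x\<in>{0..1}. \<forall>t>0.
        D 0 1 x t + (f0 - f1) * (1 - x) * x * D 1 0 x t
        = l0 * f0 * (D 0 0 (x + g0 * (1 - x)) t - D 0 0 x t)
          + l1 * f1 * (D 0 0 (x - g1 * x) t - D 0 0 x t)) \<and>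
     (\<forall>x\<in>{0..1}. D 0 0 x 0 = x)"

end

theory Submission
  imports Defs
begin


lemma deriv_eq01:
  fixes L R :: "real \<Rightarrow> real"
  assumes "\<forall>y\<in>{0..1}. L y = R y" "(L has_real_derivative l) (at x within {0..1})"
    "(R has_real_derivative r) (at x within {0..1})" "x\<in>{0..1}"
  shows "l = r"
proof -
  have "(R has_real_derivative l) (at x within {0..1})"
    using has_field_derivative_transform_within[OF assms(2), of 1 R] assms(1,4) by auto
  then show ?thesis using assms(3,4)
    vector_derivative_unique_within_closed_interval[of 0 1 x R l r]
    by (simp add: has_real_derivative_iff_has_vector_derivative box_real)
qed

lemma chainT:
  fixes G G' T :: "real \<Rightarrow> real"
  assumes "\<And>z. z\<in>{0..1} \<Longrightarrow> (G has_real_derivative G' z) (at z within {0..1})"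
    "x\<in>{0..1}" "T ` {0..1} \<subseteq> {0..1}" "\<And>y. T y = p + q * y"
  shows "((\<lambda>y. G (T y)) has_real_derivative G' (T x) * q) (at x within {0..1})"
proof -
  have T: "T = (\<lambda>y. p + q * y)" using assms(4) by auto
  have "(T has_real_derivative q) (at x within {0..1})"
    unfolding T by (auto intro!: derivative_eq_intros)
  moreover have "(G has_real_derivative G' (T x)) (at (T x) within T ` {0..1})"
    using assms(1)[of "T x"] assms(2,3) has_field_derivative_subset by blast
  ultimately show ?thesis using DERIV_image_chain[of G "G' (T x)" T x "{0..1}" q]
    by (simp add: o_def)
qed

lemma minprin:
  fixes W Wx Wt :: "real \<Rightarrow> real \<Rightarrow> real" and s C :: real
  assumes cont: "continuous_on ({0..1}\<times>{0..}) (\<lambda>(x,t). W x t)"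
  and dx: "\<And>x t. x\<in>{0..1} \<Longrightarrow> t>0 \<Longrightarrow> ((\<lambda>y. W y t) has_real_derivative Wx x t) (at x within {0..1})"
  and dt: "\<And>x t. x\<in>{0..1} \<Longrightarrow> t>0 \<Longrightarrow> ((\<lambda>s. W x s) has_real_derivative Wt x t) (at t within {0..})"
  and init: "\<And>x. x\<in>{0..1} \<Longrightarrow> W x 0 \<ge> 0"
  and key: "\<And>x t. x\<in>{0..1} \<Longrightarrow> t>0 \<Longrightarrow> (\<forall>y\<in>{0..1}. W x t \<le> W y t) \<Longrightarrow> W x t < 0 \<Longrightarrow>
       Wt x t + s * (1-x) * x * Wx x t \<ge> C * W x t"
  and x: "x\<in>{0..1}" and t: "t \<ge> 0"
  shows "W x t \<ge> 0"
proof (rule ccontr)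
  assume neg: "\<not> W x t \<ge> 0"
  define M where "M = \<bar>C\<bar> + 1"
  define K where "K = {0..1::real}\<times>{0..t}"
  define F where "F = (\<lambda>p::real\<times>real. exp(-M * snd p) * (\<lambda>(x,t). W x t) p)"
  have KQ: "K \<subseteq> {0..1}\<times>{0..}" unfolding K_def by auto
  have contF: "continuous_on K F" unfolding F_def
    by (intro continuous_intros continuous_on_subset[OF cont KQ])
  have "compact K" unfolding K_def by (intro compact_Times compact_Icc)
  moreover have "K \<noteq> {}" using t unfolding K_def by auto
  ultimately obtain p where p: "p\<in>K" "\<forall>q\<in>K. F p \<le> F q"
    using continuous_attains_inf[OF _ _ contF] by blast
  obtain xs ts where pxt: "p = (xs,ts)" by force
  have xs: "xs \<in> {0..1}" and ts: "0 \<le> ts" "ts \<le> t" using p(1) pxt K_def by auto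
  have "F p \<le> F (x,t)" using p(2) x t K_def by auto
  also have "F (x,t) < 0" using neg unfolding F_def by (simp add: mult_pos_neg)
  finally have Wneg: "W xs ts < 0" unfolding F_def pxt by (simp add: mult_less_0_iff)
  have ts0: "ts > 0" using ts init[OF xs] Wneg by (cases "ts = 0") auto
  have xmin: "\<forall>y\<in>{0..1}. W xs ts \<le> W y ts"
  proof
    fix y :: real assume y: "y\<in>{0..1}"
    have "F p \<le> F (y,ts)" using p(2) y ts K_def by auto
    then show "W xs ts \<le> W y ts" unfolding F_def pxt by simp
  qed
  have phi: "s * (1-xs) * xs * Wx xs ts = 0"
  proof (cases "xs = 0 \<or> xs = 1")
    case True then show ?thesis by auto
  next
    case False
    then have xi: "xs \<in> interior {0..1}" using xs by auto
    have der: "((\<lambda>y. W y ts) has_real_derivative Wx xs ts) (at xs)"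
      using dx[OF xs ts0] at_within_interior[OF xi] by simp
    have "0 < min xs (1-xs)" using False xs by auto
    moreover have "\<forall>y. \<bar>xs - y\<bar> < min xs (1-xs) \<longrightarrow> W xs ts \<le> W y ts"
      using xmin by (auto simp: abs_if split: if_splits)
    ultimately have "Wx xs ts = 0" using DERIV_local_min[OF der] by blast
    then show ?thesis by simp
  qed
  have Wt: "Wt xs ts \<ge> C * W xs ts" using key[OF xs ts0 xmin Wneg] phi by simp
  have ti: "ts \<in> interior {0..}" using ts0 by simp
  have dh: "((\<lambda>s. exp(-M * s) * W xs s) has_real_derivative
       exp(-M * ts) * (-M) * W xs ts + exp(-M * ts) * Wt xs ts) (at ts)"
    using dt[OF xs ts0] at_within_interior[OF ti]
    by (auto intro!: derivative_eq_intros)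
  have "(C - M) * W xs ts > 0" using Wneg M_def by (intro mult_neg_neg) auto
  then have "Wt xs ts - M * W xs ts > 0" using Wt by (simp add: algebra_simps)
  then have pos: "exp(-M * ts) * (-M) * W xs ts + exp(-M * ts) * Wt xs ts > 0"
  proof -
    have "exp(-M * ts) * (-M) * W xs ts + exp(-M * ts) * Wt xs ts = exp(-M * ts) * (Wt xs ts - M * W xs ts)"
      by (simp add: algebra_simps)
    then show ?thesis using \<open>Wt xs ts - M * W xs ts > 0\<close> by simp
  qed
  obtain d where d: "d>0" "\<forall>h>0. h<d \<longrightarrow> exp(-M * (ts-h)) * W xs (ts-h) < exp(-M * ts) * W xs ts"
    using DERIV_pos_inc_left[OF dh pos] by blast
  define h where "h = min (d/2) ts"
  have h: "h > 0" "h < d" "h \<le> ts" using d ts0 h_def by auto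
  have "(xs, ts-h) \<in> K" using xs h ts K_def by auto
  then have "F p \<le> F (xs, ts-h)" using p(2) by blast
  then show False using d(2) h unfolding F_def pxt by force
qed



lemma convex01:
  fixes f f' f'' :: "real \<Rightarrow> real"
  assumes d1: "\<And>x. x\<in>{0..1} \<Longrightarrow> (f has_real_derivative f' x) (at x within {0..1})"
  and d2: "\<And>x. x\<in>{0..1} \<Longrightarrow> (f' has_real_derivative f'' x) (at x within {0..1})"
  and pos: "\<And>x. x\<in>{0..1} \<Longrightarrow> f'' x \<ge> 0"
  shows "convex_on {0..1} f"
proof -
  have cf: "continuous_on {0..1} f"
    using d1 DERIV_continuous continuous_on_eq_continuous_within by blast
  have cf': "continuous_on {0..1} f'"
    using d2 DERIV_continuous continuous_on_eq_continuous_within by blast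
  have at1: "\<And>z. 0 < z \<Longrightarrow> z < 1 \<Longrightarrow> (f has_real_derivative f' z) (at z)"
  proof -
    fix z :: real assume "0<z" "z<1"
    then have "z \<in> interior {0..1}" by simp
    then show "(f has_real_derivative f' z) (at z)"
      using d1[of z] at_within_interior by (metis interior_subset subsetD)
  qed
  have at2: "\<And>z. 0 < z \<Longrightarrow> z < 1 \<Longrightarrow> (f' has_real_derivative f'' z) (at z)"
  proof -
    fix z :: real assume "0<z" "z<1"
    then have "z \<in> interior {0..1}" by simp
    then show "(f' has_real_derivative f'' z) (at z)"
      using d2[of z] at_within_interior by (metis interior_subset subsetD)
  qed
  have dif: "\<And>w. 0<w \<Longrightarrow> w<1 \<Longrightarrow> f differentiable (at w)"
    using at1 real_differentiable_def by blast
  have mono: "f' a \<le> f' b" if ab: "0 < a" "a \<le> b" "b < 1" for a b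
  proof (rule DERIV_nonneg_imp_increasing_open[OF ab(2)])
    show "\<And>x. a < x \<Longrightarrow> x < b \<Longrightarrow> \<exists>y. (f' has_real_derivative y) (at x) \<and> 0 \<le> y"
      using at2 pos ab by (meson less_eq_real_def less_le_trans le_less_trans atLeastAtMost_iff)
    show "continuous_on {a..b} f'" by (rule continuous_on_subset[OF cf']) (use ab in auto)
  qed
  show ?thesis
  proof (rule convex_on_linorderI)
    show "convex {0..1::real}" by (rule convex_real_interval)
  next
    fix t x y :: real
    assume t: "t > 0" "t < 1"
    assume xy: "x \<in> {0..1}" "y \<in> {0..1}" "x < y"
    define z where "z = (1 - t) * x + t * y"
    from xy t have xz: "z > x" by (simp add: z_def algebra_simps)
    have "y - z = (1 - t) * (y - x)" by (simp add: z_def algebra_simps)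
    also from xy t have "\<dots> > 0" by (intro mult_pos_pos) simp_all
    finally have yz: "z < y" by simp
    have "\<exists>l \<xi>. x < \<xi> \<and> \<xi> < z \<and> DERIV f \<xi> :> l \<and> f z - f x = (z - x) * l"
      using xz yz xy
      by (intro MVT) (auto intro: continuous_on_subset[OF cf] intro!: dif)
    then obtain \<xi> l where \<xi>: "\<xi> > x" "\<xi> < z" "DERIV f \<xi> :> l" "f z - f x = (z - x) * l"
      by auto
    have "l = f' \<xi>" using DERIV_unique[OF \<xi>(3) at1] \<xi> xy yz by auto
    have "\<exists>l \<eta>. z < \<eta> \<and> \<eta> < y \<and> DERIV f \<eta> :> l \<and> f y - f z = (y - z) * l"
      using xz yz xy
      by (intro MVT) (auto intro: continuous_on_subset[OF cf] intro!: dif)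
    then obtain \<eta> k where \<eta>: "\<eta> > z" "\<eta> < y" "DERIV f \<eta> :> k" "f y - f z = (y - z) * k"
      by auto
    have "k = f' \<eta>" using DERIV_unique[OF \<eta>(3) at1] \<eta> xy xz by auto
    have "f' \<xi> \<le> f' \<eta>" using mono[of \<xi> \<eta>] \<xi> \<eta> xy by auto
    then have "(f y - f z) / (y - z) \<ge> (f z - f x) / (z - x)"
      using \<xi>(4) \<eta>(4) \<open>l = f' \<xi>\<close> \<open>k = f' \<eta>\<close> xz yz by simp
    then have "(f y - f z) * (z - x) \<ge> (f z - f x) * (y - z)"
      using xz yz by (simp add: field_simps)
    also have "z - x = t * (y - x)" by (simp add: z_def algebra_simps)
    also have "y - z = (1 - t) * (y - x)" by (simp add: z_def algebra_simps)
    finally have "(f y - f z) * t \<ge> (f z - f x) * (1 - t)" using xy by simp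
    then show "(1 - t) * f x + t * f y \<ge> f ((1 - t) *\<^sub>R x + t *\<^sub>R y)"
      by (simp add: z_def algebra_simps)
  qed
qed


lemma ineq1:
  fixes s a b g0 g1 x v v0 v1 :: real
  assumes "s>0" "a\<ge>0" "b\<ge>0" "g0\<le>1" "0<g0" "0<g1" "g1\<le>1" "0\<le>x" "x\<le>1" "v<0" "v0\<ge>v" "v1\<ge>v"
  shows "-s * (1-2 * x) * v + a * ((1-g0) * v0 - v) + b * ((1-g1) * v1 - v) \<ge> (s+a+b) * v"
proof -
  have 1: "s * (-v) * (2-2 * x) \<ge> 0" by (intro mult_nonneg_nonneg) (use assms in auto)
  have 2: "a * ((1-g0) * (v0 - v)) \<ge> 0" by (intro mult_nonneg_nonneg) (use assms in auto)
  have 3: "a * (-v) + a * (g0 * (-v)) \<ge> 0" by (intro add_nonneg_nonneg mult_nonneg_nonneg) (use assms in auto)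
  have 4: "b * ((1-g1) * (v1 - v)) \<ge> 0" by (intro mult_nonneg_nonneg) (use assms in auto)
  have 5: "b * (-v) + b * (g1 * (-v)) \<ge> 0" by (intro add_nonneg_nonneg mult_nonneg_nonneg) (use assms in auto)
  have e: "(-s * (1-2 * x) * v + a * ((1-g0) * v0 - v) + b * ((1-g1) * v1 - v)) - (s+a+b) * v
     = s * (-v) * (2-2 * x) + a * ((1-g0) * (v0 - v)) + a * (-v) + a * (g0 * (-v)) + b * ((1-g1) * (v1 - v)) + b * (-v) + b * (g1 * (-v))"
    by (simp add: algebra_simps)
  show ?thesis using 1 2 3 4 5 e by linarith
qed

lemma ineq2:
  fixes s a b g0 g1 x v w w0 w1 :: real
  assumes "s>0" "a\<ge>0" "b\<ge>0" "g0\<le>1" "0<g0" "0<g1" "g1\<le>1" "0\<le>x" "x\<le>1" "w<0" "w0\<ge>w" "w1\<ge>w" "v \<ge> 0"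
  shows "2 * s * v - 2 * s * (1-2 * x) * w + a * ((1-g0)^2 * w0 - w) + b * ((1-g1)^2 * w1 - w) \<ge> (2 * s+a+b) * w"
proof -
  have q0: "(1-g0)^2 \<le> 1" by (intro power_le_one) (use assms in auto)
  have q1: "(1-g1)^2 \<le> 1" by (intro power_le_one) (use assms in auto)
  have 1: "2 * s * (-w) * (2-2 * x) \<ge> 0" by (intro mult_nonneg_nonneg) (use assms in auto)
  have 2: "a * ((1-g0)^2 * (w0 - w)) \<ge> 0" by (intro mult_nonneg_nonneg) (use assms in auto)
  have 3: "a * ((-w) * (2-(1-g0)^2)) \<ge> 0" by (intro mult_nonneg_nonneg) (use assms q0 in auto)
  have 4: "b * ((1-g1)^2 * (w1 - w)) \<ge> 0" by (intro mult_nonneg_nonneg) (use assms in auto)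
  have 5: "b * ((-w) * (2-(1-g1)^2)) \<ge> 0" by (intro mult_nonneg_nonneg) (use assms q1 in auto)
  have 6: "2 * s * v \<ge> 0" using assms by simp
  have e: "(2 * s * v - 2 * s * (1-2 * x) * w + a * ((1-g0)^2 * w0 - w) + b * ((1-g1)^2 * w1 - w)) - (2 * s+a+b) * w
     = 2 * s * (-w) * (2-2 * x) + a * ((1-g0)^2 * (w0 - w)) + a * ((-w) * (2-(1-g0)^2)) + b * ((1-g1)^2 * (w1 - w)) + b * ((-w) * (2-(1-g1)^2)) + 2 * s * v"
    by (simp add: algebra_simps)
  show ?thesis using 1 2 3 4 5 6 e by linarith
qed

lemma ineq3:
  fixes s a b g0 g1 x v v0 v1 :: real
  assumes "s>0" "a\<ge>0" "b\<ge>0" "g0\<le>1" "0<g0" "0<g1" "g1\<le>1" "0\<le>x" "x\<le>1" "v>0" "v0\<le>v" "v1\<le>v" "v0 \<ge> 0" "v1 \<ge> 0"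
  shows "-s * (1-2 * x) * v + a * ((1-g0) * v0 - v) + b * ((1-g1) * v1 - v) \<le> s * v"
proof -
  have 1: "s * v * (2-2 * x) \<ge> 0" by (intro mult_nonneg_nonneg) (use assms in auto)
  have 2: "a * ((1-g0) * (v - v0)) \<ge> 0" by (intro mult_nonneg_nonneg) (use assms in auto)
  have 3: "a * (g0 * v) \<ge> 0" by (intro mult_nonneg_nonneg) (use assms in auto)
  have 4: "b * ((1-g1) * (v - v1)) \<ge> 0" by (intro mult_nonneg_nonneg) (use assms in auto)
  have 5: "b * (g1 * v) \<ge> 0" by (intro mult_nonneg_nonneg) (use assms in auto)
  have e: "s * v - (-s * (1-2 * x) * v + a * ((1-g0) * v0 - v) + b * ((1-g1) * v1 - v))
     = s * v * (2-2 * x) + a * ((1-g0) * (v - v0)) + a * (g0 * v) + b * ((1-g1) * (v - v1)) + b * (g1 * v)"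
    by (simp add: algebra_simps)
  show ?thesis using 1 2 3 4 5 e by linarith
qed

lemma ineq4:
  fixes s a b g0 g1 x v w w0 w1 ep E :: real
  assumes "s>0" "a\<ge>0" "b\<ge>0" "g0\<le>1" "0<g0" "0<g1" "g1\<le>1" "0\<le>x" "x\<le>1" "w>0" "w0\<le>w" "w1\<le>w"
     "w0 \<ge> 0" "w1 \<ge> 0" "v \<le> ep" "ep \<le> E"
  shows "2 * s * v - 2 * s * (1-2 * x) * w + a * ((1-g0)^2 * w0 - w) + b * ((1-g1)^2 * w1 - w) \<le> 2 * s * E + 2 * s * w"
proof -
  have q0: "(1-g0)^2 \<le> 1" by (intro power_le_one) (use assms in auto)
  have q1: "(1-g1)^2 \<le> 1" by (intro power_le_one) (use assms in auto)
  have 1: "2 * s * w * (2-2 * x) \<ge> 0" by (intro mult_nonneg_nonneg) (use assms in auto)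
  have 2: "a * (w - w0) + a * ((1-(1-g0)^2) * w0) \<ge> 0" by (intro add_nonneg_nonneg mult_nonneg_nonneg) (use assms q0 in auto)
  have 3: "b * (w - w1) + b * ((1-(1-g1)^2) * w1) \<ge> 0" by (intro add_nonneg_nonneg mult_nonneg_nonneg) (use assms q1 in auto)
  have 4: "2 * s * (E - v) \<ge> 0" by (intro mult_nonneg_nonneg) (use assms in auto)
  have e: "2 * s * E + 2 * s * w - (2 * s * v - 2 * s * (1-2 * x) * w + a * ((1-g0)^2 * w0 - w) + b * ((1-g1)^2 * w1 - w))
     = 2 * s * w * (2-2 * x) + a * (w - w0) + a * ((1-(1-g0)^2) * w0) + b * (w - w1) + b * ((1-(1-g1)^2) * w1) + 2 * s * (E - v)"
    by (simp add: algebra_simps power2_eq_square)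
  show ?thesis using 1 2 3 4 e by linarith
qed


theorem lemma4p3:
  fixes f0 f1 l0 l1 g0 g1 :: real
    and D :: "nat \<Rightarrow> nat \<Rightarrow> real \<Rightarrow> real \<Rightarrow> real"
  assumes "f0 > 0" and "f1 \<ge> 0" and "f0 - f1 > 0"
    and "l0 \<ge> 0" and "l1 \<ge> 0"
    and "0 < g0" and "g0 \<le> 1" and "0 < g1" and "g1 \<le> 1"
    and "is_solution f0 f1 l0 l1 g0 g1 D"
  shows "(\<forall>t>0. convex_on {0..1} (\<lambda>x. D 0 0 x t)) \<and>
         (\<exists>c>0. \<exists>\<mu>::real. \<forall>x\<in>{0..1}. \<forall>t>0.
             0 \<le> D 2 0 x t \<and> D 2 0 x t \<le> c * exp (\<mu> * t))"
proof -
  note sol = assms(10)[unfolded is_solution_def smooth_partials_def]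
  have cont: "\<And>i j. continuous_on ({0..1}\<times>{0..}) (\<lambda>(x,t). D i j x t)" using sol by blast
  have dX: "\<And>i j x t. t \<ge> 0 \<Longrightarrow> x\<in>{0..1} \<Longrightarrow>
     ((\<lambda>y. D i j y t) has_real_derivative D (Suc i) j x t) (at x within {0..1})" using sol by blast
  have dT: "\<And>i j x t. x\<in>{0..1} \<Longrightarrow> t \<ge> 0 \<Longrightarrow>
     ((\<lambda>s. D i j x s) has_real_derivative D i (Suc j) x t) (at t within {0..})" using sol by blast
  define \<sigma> where "\<sigma> = f0 - f1"
  define a where "a = l0 * f0"
  define b where "b = l1 * f1"
  define T0 where "T0 = (\<lambda>y::real. g0 + (1 - g0) * y)"
  define T1 where "T1 = (\<lambda>y::real. 0 + (1 - g1) * y)"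
  have sp: "\<sigma> > 0" "a \<ge> 0" "b \<ge> 0" using assms unfolding \<sigma>_def a_def b_def by auto
  have T0i: "T0 y \<in> {0..1}" if "y \<in> {0..1}" for y
  proof -
    have "(1-g0) * y \<le> (1-g0) * 1" by (rule mult_left_mono) (use that assms(7) in auto)
    moreover have "(1-g0) * y \<ge> 0" using that assms(7) by simp
    ultimately show ?thesis unfolding T0_def using assms(6) by simp
  qed
  have T1i: "T1 y \<in> {0..1}" if "y \<in> {0..1}" for y
  proof -
    have "(1-g1) * y \<le> 1 * 1" by (rule mult_mono) (use that assms(8,9) in auto)
    moreover have "(1-g1) * y \<ge> 0" using that assms(9) by simp
    ultimately show ?thesis unfolding T1_def by simp
  qed
  have T0r: "T0 ` {0..1} \<subseteq> {0..1}" using T0i by blast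
  have T1r: "T1 ` {0..1} \<subseteq> {0..1}" using T1i by blast
  have pde: "\<And>x t. x\<in>{0..1} \<Longrightarrow> t>0 \<Longrightarrow> D 0 1 x t + \<sigma> * (1 - x) * x * D 1 0 x t
      = a * (D 0 0 (T0 x) t - D 0 0 x t) + b * (D 0 0 (T1 x) t - D 0 0 x t)"
    using sol unfolding \<sigma>_def a_def b_def T0_def T1_def by (auto simp: algebra_simps)
  have ic: "\<And>x. x\<in>{0..1} \<Longrightarrow> D 0 0 x 0 = x" using sol by blast
  have chain: "((\<lambda>y. D i j (T y) t) has_real_derivative D (Suc i) j (T x) t * q) (at x within {0..1})"
    if "t \<ge> 0" "x\<in>{0..1}" "T ` {0..1} \<subseteq> {0..1}" "\<And>y. T y = p + q * y" for i j t x T p q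
    by (rule chainT[OF dX[OF that(1)] that(2,3)]) (use that(4) in auto)
  have c0: "((\<lambda>y. D i j (T0 y) t) has_real_derivative D (Suc i) j (T0 x) t * (1 - g0)) (at x within {0..1})"
    if "t \<ge> 0" "x\<in>{0..1}" for i j t x
    by (rule chain[OF that T0r]) (simp add: T0_def)
  have c1: "((\<lambda>y. D i j (T1 y) t) has_real_derivative D (Suc i) j (T1 x) t * (1 - g1)) (at x within {0..1})"
    if "t \<ge> 0" "x\<in>{0..1}" for i j t x
    by (rule chain[OF that T1r]) (simp add: T1_def)
  have E1: "D 1 1 x t + \<sigma> * (1 - x) * x * D 2 0 x t
      = - \<sigma> * (1 - 2 * x) * D 1 0 x t + a * ((1 - g0) * D 1 0 (T0 x) t - D 1 0 x t)
        + b * ((1 - g1) * D 1 0 (T1 x) t - D 1 0 x t)" if x: "x\<in>{0..1}" and t: "t > 0" for x t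
  proof -
    have t0: "t \<ge> 0" using t by simp
    have dL: "((\<lambda>y. D 0 1 y t + \<sigma> * (1 - y) * y * D 1 0 y t) has_real_derivative
         D 1 1 x t + (\<sigma> * (1 - 2 * x) * D 1 0 x t + \<sigma> * (1 - x) * x * D 2 0 x t)) (at x within {0..1})"
      using dX[OF t0 x, of 0 1] dX[OF t0 x, of 1 0]
      by (auto intro!: derivative_eq_intros simp: algebra_simps numeral_2_eq_2)
    have dR: "((\<lambda>y. a * (D 0 0 (T0 y) t - D 0 0 y t) + b * (D 0 0 (T1 y) t - D 0 0 y t)) has_real_derivative
         a * (D 1 0 (T0 x) t * (1 - g0) - D 1 0 x t) + b * (D 1 0 (T1 x) t * (1 - g1) - D 1 0 x t)) (at x within {0..1})"
      using dX[OF t0 x, of 0 0] c0[OF t0 x, of 0 0] c1[OF t0 x, of 0 0]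
      by (auto intro!: derivative_eq_intros)
    have "D 1 1 x t + (\<sigma> * (1 - 2 * x) * D 1 0 x t + \<sigma> * (1 - x) * x * D 2 0 x t) =
       a * (D 1 0 (T0 x) t * (1 - g0) - D 1 0 x t) + b * (D 1 0 (T1 x) t * (1 - g1) - D 1 0 x t)"
      by (rule deriv_eq01[OF _ dL dR x]) (use pde t in auto)
    then show ?thesis by (simp add: algebra_simps)
  qed
  have E2: "D 2 1 x t + \<sigma> * (1 - x) * x * D 3 0 x t
      = 2 * \<sigma> * D 1 0 x t - 2 * \<sigma> * (1 - 2 * x) * D 2 0 x t
        + a * ((1 - g0)^2 * D 2 0 (T0 x) t - D 2 0 x t)
        + b * ((1 - g1)^2 * D 2 0 (T1 x) t - D 2 0 x t)" if x: "x\<in>{0..1}" and t: "t > 0" for x t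
  proof -
    have t0: "t \<ge> 0" using t by simp
    have dL: "((\<lambda>y. D 1 1 y t + \<sigma> * (1 - y) * y * D 2 0 y t) has_real_derivative
         D 2 1 x t + (\<sigma> * (1 - 2 * x) * D 2 0 x t + \<sigma> * (1 - x) * x * D 3 0 x t)) (at x within {0..1})"
      using dX[OF t0 x, of 1 1] dX[OF t0 x, of 2 0]
      by (auto intro!: derivative_eq_intros simp: algebra_simps numeral_2_eq_2 numeral_3_eq_3)
    have dR: "((\<lambda>y. - \<sigma> * (1 - 2 * y) * D 1 0 y t + a * ((1 - g0) * D 1 0 (T0 y) t - D 1 0 y t)
        + b * ((1 - g1) * D 1 0 (T1 y) t - D 1 0 y t)) has_real_derivative
         (2 * \<sigma> * D 1 0 x t - \<sigma> * (1 - 2 * x) * D 2 0 x t)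
         + a * ((1 - g0) * (D 2 0 (T0 x) t * (1 - g0)) - D 2 0 x t)
         + b * ((1 - g1) * (D 2 0 (T1 x) t * (1 - g1)) - D 2 0 x t)) (at x within {0..1})"
      using dX[OF t0 x, of 1 0] c0[OF t0 x, of 1 0] c1[OF t0 x, of 1 0]
      by (auto intro!: derivative_eq_intros simp: algebra_simps numeral_2_eq_2)
    have "D 2 1 x t + (\<sigma> * (1 - 2 * x) * D 2 0 x t + \<sigma> * (1 - x) * x * D 3 0 x t) =
         (2 * \<sigma> * D 1 0 x t - \<sigma> * (1 - 2 * x) * D 2 0 x t)
         + a * ((1 - g0) * (D 2 0 (T0 x) t * (1 - g0)) - D 2 0 x t)
         + b * ((1 - g1) * (D 2 0 (T1 x) t * (1 - g1)) - D 2 0 x t)"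
      by (rule deriv_eq01[OF _ dL dR x]) (use E1 t in auto)
    then show ?thesis by (simp add: algebra_simps power2_eq_square)
  qed
  have ic1: "D 1 0 x 0 = 1" if x: "x\<in>{0..1}" for x
  proof -
    have "((\<lambda>y. y) has_real_derivative 1) (at x within {0..1})" by (rule DERIV_ident)
    moreover have "((\<lambda>y. D 0 0 y 0) has_real_derivative D 1 0 x 0) (at x within {0..1})"
      using dX[of 0 x 0 0] x by simp
    ultimately show ?thesis by (intro deriv_eq01[where L="\<lambda>y. D 0 0 y 0" and R="\<lambda>y. y"]) (use ic x in auto)
  qed
  have ic2: "D 2 0 x 0 = 0" if x: "x\<in>{0..1}" for x
  proof -
    have "((\<lambda>y. 1) has_real_derivative 0) (at x within {0..1})" by (rule DERIV_const)
    moreover have "((\<lambda>y. D 1 0 y 0) has_real_derivative D 2 0 x 0) (at x within {0..1})"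
      using dX[of 0 x 1 0] x by (simp add: numeral_2_eq_2)
    ultimately show ?thesis by (intro deriv_eq01[where L="\<lambda>y. D 1 0 y 0" and R="\<lambda>y. 1"]) (use ic1 x in auto)
  qed
  have dX10: "((\<lambda>y. D 1 0 y t) has_real_derivative D 2 0 x t) (at x within {0..1})"
    if "x\<in>{0..1}" "t>0" for x t using dX[of t x 1 0] that by (simp add: numeral_2_eq_2)
  have dX20: "((\<lambda>y. D 2 0 y t) has_real_derivative D 3 0 x t) (at x within {0..1})"
    if "x\<in>{0..1}" "t>0" for x t using dX[of t x 2 0] that by (simp add: numeral_3_eq_3)
  have dT10: "((\<lambda>r. D 1 0 x r) has_real_derivative D 1 1 x t) (at t within {0..})"
    if "x\<in>{0..1}" "t>0" for x t using dT[of x t 1 0] that by simp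
  have dT20: "((\<lambda>r. D 2 0 x r) has_real_derivative D 2 1 x t) (at t within {0..})"
    if "x\<in>{0..1}" "t>0" for x t using dT[of x t 2 0] that by simp
  have P1: "D 1 0 x t \<ge> 0" if "x\<in>{0..1}" "t \<ge> 0" for x t
  proof (rule minprin[where Wx="D 2 0" and Wt="D 1 1" and s=\<sigma> and C="\<sigma>+a+b", OF cont dX10 dT10 _ _ that])
    show "\<And>x. x \<in> {0..1} \<Longrightarrow> 0 \<le> D 1 0 x 0" using ic1 by simp
    fix x t :: real
    assume x: "x\<in>{0..1}" and t: "t>0" and m: "\<forall>y\<in>{0..1}. D 1 0 x t \<le> D 1 0 y t" and n: "D 1 0 x t < 0"
    show "D 1 1 x t + \<sigma> * (1 - x) * x * D 2 0 x t \<ge> (\<sigma>+a+b) * D 1 0 x t"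
      unfolding E1[OF x t]
      by (rule ineq1) (use sp assms(6-9) x n m T0i[OF x] T1i[OF x] in auto)
  qed
  have P2: "D 2 0 x t \<ge> 0" if "x\<in>{0..1}" "t \<ge> 0" for x t
  proof (rule minprin[where Wx="D 3 0" and Wt="D 2 1" and s=\<sigma> and C="2 * \<sigma>+a+b", OF cont dX20 dT20 _ _ that])
    show "\<And>x. x \<in> {0..1} \<Longrightarrow> 0 \<le> D 2 0 x 0" using ic2 by simp
    fix x t :: real
    assume x: "x\<in>{0..1}" and t: "t>0" and m: "\<forall>y\<in>{0..1}. D 2 0 x t \<le> D 2 0 y t" and n: "D 2 0 x t < 0"
    show "D 2 1 x t + \<sigma> * (1 - x) * x * D 3 0 x t \<ge> (2 * \<sigma>+a+b) * D 2 0 x t"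
      unfolding E2[OF x t]
      by (rule ineq2) (use sp assms(6-9) x n m T0i[OF x] T1i[OF x] P1[OF x] t in auto)
  qed
  have P3: "exp (\<sigma> * t) - D 1 0 x t \<ge> 0" if "x\<in>{0..1}" "t \<ge> 0" for x t
  proof (rule minprin[where W="\<lambda>x t. exp (\<sigma> * t) - D 1 0 x t" and Wx="\<lambda>x t. - D 2 0 x t"
       and Wt="\<lambda>x t. \<sigma> * exp (\<sigma> * t) - D 1 1 x t" and s=\<sigma> and C="\<sigma>", OF _ _ _ _ _ that])
    have "(\<lambda>(x,t). exp (\<sigma> * t) - D 1 0 x t) = (\<lambda>p. exp (\<sigma> * snd p) - (\<lambda>(x,t). D 1 0 x t) p)"
      by (auto simp: fun_eq_iff)
    then show "continuous_on ({0..1} \<times> {0..}) (\<lambda>(x, t). exp (\<sigma> * t) - D 1 0 x t)"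
      using cont[of 1 0] by (auto intro!: continuous_intros)
    show "\<And>x t. x \<in> {0..1} \<Longrightarrow> 0 < t \<Longrightarrow>
      ((\<lambda>y. exp (\<sigma> * t) - D 1 0 y t) has_real_derivative - D 2 0 x t) (at x within {0..1})"
      using dX10 by (auto intro!: derivative_eq_intros)
    show "\<And>x t. x \<in> {0..1} \<Longrightarrow> 0 < t \<Longrightarrow>
      ((\<lambda>r. exp (\<sigma> * r) - D 1 0 x r) has_real_derivative \<sigma> * exp (\<sigma> * t) - D 1 1 x t) (at t within {0..})"
      using dT10 by (auto intro!: derivative_eq_intros)
    show "\<And>x. x \<in> {0..1} \<Longrightarrow> 0 \<le> exp (\<sigma> * 0) - D 1 0 x 0" using ic1 by simp
    fix x t :: real
    assume x: "x\<in>{0..1}" and t: "t>0"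
      and m: "\<forall>y\<in>{0..1}. exp (\<sigma> * t) - D 1 0 x t \<le> exp (\<sigma> * t) - D 1 0 y t"
      and n: "exp (\<sigma> * t) - D 1 0 x t < 0"
    have vp: "D 1 0 x t > 0" using n exp_gt_zero[of "\<sigma>* t"] by linarith
    have "- \<sigma> * (1 - 2 * x) * D 1 0 x t + a * ((1 - g0) * D 1 0 (T0 x) t - D 1 0 x t)
        + b * ((1 - g1) * D 1 0 (T1 x) t - D 1 0 x t) \<le> \<sigma> * D 1 0 x t"
      by (rule ineq3) (use sp assms(6-9) x n m T0i[OF x] T1i[OF x] P1 t vp in auto)
    then have "D 1 1 x t + \<sigma> * (1 - x) * x * D 2 0 x t \<le> \<sigma> * D 1 0 x t" using E1[OF x t] by simp
    then show "\<sigma> * exp (\<sigma> * t) - D 1 1 x t + \<sigma> * (1 - x) * x * - D 2 0 x t \<ge> \<sigma> * (exp (\<sigma> * t) - D 1 0 x t)"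
      by (simp add: algebra_simps)
  qed
  have P4: "exp (4 * \<sigma> * t) - D 2 0 x t \<ge> 0" if "x\<in>{0..1}" "t \<ge> 0" for x t
  proof (rule minprin[where W="\<lambda>x t. exp (4 * \<sigma> * t) - D 2 0 x t" and Wx="\<lambda>x t. - D 3 0 x t"
       and Wt="\<lambda>x t. 4 * \<sigma> * exp (4 * \<sigma> * t) - D 2 1 x t" and s=\<sigma> and C="2 * \<sigma>", OF _ _ _ _ _ that])
    have "(\<lambda>(x,t). exp (4 * \<sigma> * t) - D 2 0 x t) = (\<lambda>p. exp (4 * \<sigma> * snd p) - (\<lambda>(x,t). D 2 0 x t) p)"
      by (auto simp: fun_eq_iff)
    then show "continuous_on ({0..1} \<times> {0..}) (\<lambda>(x, t). exp (4 * \<sigma> * t) - D 2 0 x t)"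
      using cont[of 2 0] by (auto intro!: continuous_intros)
    show "\<And>x t. x \<in> {0..1} \<Longrightarrow> 0 < t \<Longrightarrow>
      ((\<lambda>y. exp (4 * \<sigma> * t) - D 2 0 y t) has_real_derivative - D 3 0 x t) (at x within {0..1})"
      using dX20 by (auto intro!: derivative_eq_intros)
    show "\<And>x t. x \<in> {0..1} \<Longrightarrow> 0 < t \<Longrightarrow>
      ((\<lambda>r. exp (4 * \<sigma> * r) - D 2 0 x r) has_real_derivative 4 * \<sigma> * exp (4 * \<sigma> * t) - D 2 1 x t) (at t within {0..})"
      using dT20 by (auto intro!: derivative_eq_intros)
    show "\<And>x. x \<in> {0..1} \<Longrightarrow> 0 \<le> exp (4 * \<sigma> * 0) - D 2 0 x 0" using ic2 by simp
    fix x t :: real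
    assume x: "x\<in>{0..1}" and t: "t>0"
      and m: "\<forall>y\<in>{0..1}. exp (4 * \<sigma> * t) - D 2 0 x t \<le> exp (4 * \<sigma> * t) - D 2 0 y t"
      and n: "exp (4 * \<sigma> * t) - D 2 0 x t < 0"
    have wp: "D 2 0 x t > 0" using n exp_gt_zero[of "4 * \<sigma>* t"] by linarith
    have ee: "exp (\<sigma> * t) \<le> exp (4 * \<sigma> * t)" using sp t by simp
    have "2 * \<sigma> * D 1 0 x t - 2 * \<sigma> * (1 - 2 * x) * D 2 0 x t
        + a * ((1 - g0)^2 * D 2 0 (T0 x) t - D 2 0 x t)
        + b * ((1 - g1)^2 * D 2 0 (T1 x) t - D 2 0 x t) \<le> 2 * \<sigma> * exp (4 * \<sigma> * t) + 2 * \<sigma> * D 2 0 x t"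
      by (rule ineq4[where ep="exp (\<sigma> * t)"])
         (use sp assms(6-9) x n m T0i[OF x] T1i[OF x] P2 P3[OF x] t ee wp in auto)
    then have "D 2 1 x t + \<sigma> * (1 - x) * x * D 3 0 x t \<le> 2 * \<sigma> * exp (4 * \<sigma> * t) + 2 * \<sigma> * D 2 0 x t"
      using E2[OF x t] by simp
    then show "4 * \<sigma> * exp (4 * \<sigma> * t) - D 2 1 x t + \<sigma> * (1 - x) * x * - D 3 0 x t
       \<ge> 2 * \<sigma> * (exp (4 * \<sigma> * t) - D 2 0 x t)"
      by (simp add: algebra_simps)
  qed
  have conv: "convex_on {0..1} (\<lambda>x. D 0 0 x t)" if t: "t > 0" for t
  proof (rule convex01[where f'="\<lambda>x. D 1 0 x t" and f''="\<lambda>x. D 2 0 x t"])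
    show "\<And>x. x \<in> {0..1} \<Longrightarrow> ((\<lambda>x. D 0 0 x t) has_real_derivative D 1 0 x t) (at x within {0..1})"
      using dX[of t _ 0 0] t by simp
    show "\<And>x. x \<in> {0..1} \<Longrightarrow> ((\<lambda>x. D 1 0 x t) has_real_derivative D 2 0 x t) (at x within {0..1})"
      using dX10 t by simp
    show "\<And>x. x \<in> {0..1} \<Longrightarrow> 0 \<le> D 2 0 x t" using P2 t by simp
  qed
  have "\<forall>x\<in>{0..1}. \<forall>t>0. 0 \<le> D 2 0 x t \<and> D 2 0 x t \<le> 1 * exp ((4 * \<sigma>) * t)"
    using P2 P4 by (auto simp: mult.assoc)
  then show ?thesis using conv by (metis zero_less_one)
qed
end
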